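(* Let $r,M$ be positive integers with $M\ge2$, and let $\mathcal C=\{0,\dots,M-1\}^r\subset\mathbb Z^r$. Let $\tau=\tau_M$ be the (positive) solution of $$\left(\frac1M\right)^{2\tau}+\left(\frac{M-1}{M}\right)^{\tau}=1.$$ Then for any subsets $A,B\subset\mathcal C$ we have $|A+B|\ge(|A||B|)^\tau$.
   Context: $A+B=\{a+b: a\in A, b\in B\}$, computed in $\mathbb Z^r$. *)

theory Defs
  imports "HOL-Analysis.Analysis"
begin

definition sumset :: "('a::plus) set \<Rightarrow> 'a set \<Rightarrow> 'a set" where
  "sumset A B = {a + b | a b. a \<in> A \<and> b \<in> B}"

definition cube :: "int \<Rightarrow> (int ^ 'r) set" where
  "cube M = {x. \<forall>i. 0 \<le> x $ i \<and> x $ i < M}"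

end

theory Submission
  imports Defs
begin

lemma ln_conc:
  fixes a b c :: real
  assumes "0 < a" "a < b" "b < c"
  shows "(c - b)/(c - a) * ln a + (b - a)/(c - a) * ln c \<le> ln b"
proof -
  have "concave_on {0<..} ln" by (rule ln_concave)
  from concave_onD[OF this, of "(b-a)/(c-a)" a c]
  have "(1 - (b-a)/(c-a)) * ln a + (b-a)/(c-a) * ln c
        \<le> ln ((1 - (b-a)/(c-a)) *\<^sub>R a + ((b-a)/(c-a)) *\<^sub>R c)"
    using assms by auto
  moreover have "(1 - (b-a)/(c-a)) *\<^sub>R a + ((b-a)/(c-a)) *\<^sub>R c = b"
  proof -
    have ne: "c - a \<noteq> 0" using assms by simp
    have e: "(c-b)*a + (b-a)*c = b*(c-a)" by (simp add: algebra_simps)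
    have "(1 - (b-a)/(c-a)) = (c-b)/(c-a)" using ne by (simp add: divide_simps)
    hence "(1 - (b-a)/(c-a)) *\<^sub>R a + ((b-a)/(c-a)) *\<^sub>R c = ((c-b)*a + (b-a)*c)/(c-a)"
      by (simp add: add_divide_distrib)
    also have "\<dots> = b" using e ne by simp
    finally show ?thesis .
  qed
  moreover have "1 - (b-a)/(c-a) = (c-b)/(c-a)" using assms by (simp add: divide_simps)
  ultimately show ?thesis by simp
qed

definition LL :: "real \<Rightarrow> real \<Rightarrow> real" where
  "LL t z = ln 2 + (2*t-1) * ln z + (1-t) * ln (1-z)"

lemma LL_quasi:
  assumes "1/2 \<le> t" "t \<le> 1" "0 < a" "a < b" "b < c" "c < 1"
  shows "min (LL t a) (LL t c) \<le> LL t b"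
proof -
  define u where "u = (c - b)/(c - a)"
  define v where "v = (b - a)/(c - a)"
  have ca: "c - a > 0" using assms by simp
  have uv: "u \<ge> 0" "v \<ge> 0" "u + v = 1" using assms ca
    by (auto simp: u_def v_def add_divide_distrib[symmetric])
  have 1: "u * ln a + v * ln c \<le> ln b" using ln_conc[of a b c] assms by (simp add: u_def v_def)
  have 2: "u * ln (1-a) + v * ln (1-c) \<le> ln (1-b)"
  proof -
    have "((1-a) - (1-b))/((1-a)-(1-c)) * ln (1-c) + ((1-b)-(1-c))/((1-a)-(1-c)) * ln (1-a) \<le> ln (1-b)"
      using ln_conc[of "1-c" "1-b" "1-a"] assms by simp
    moreover have "(1-a) - (1-b) = b - a" "(1-a)-(1-c) = c - a" "(1-b)-(1-c) = c - b" by simp_all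
    ultimately show ?thesis by (simp add: u_def v_def add.commute)
  qed
  have "u * LL t a + v * LL t c \<le> LL t b"
  proof -
    have "u * LL t a + v * LL t c = (u+v) * ln 2 + (2*t-1) * (u * ln a + v * ln c)
          + (1-t) * (u * ln (1-a) + v * ln (1-c))"
      by (simp add: LL_def algebra_simps)
    also have "\<dots> \<le> (u+v) * ln 2 + (2*t-1) * ln b + (1-t) * ln (1-b)"
      using 1 2 assms uv by (intro add_mono mult_left_mono) (auto simp: add.commute)
    finally show ?thesis using uv by (simp add: LL_def)
  qed
  moreover have "min (LL t a) (LL t c) \<le> u * LL t a + v * LL t c"
  proof -
    have "min (LL t a) (LL t c) = u * min (LL t a) (LL t c) + v * min (LL t a) (LL t c)"
      using uv by (simp add: distrib_right[symmetric])
    also have "\<dots> \<le> u * LL t a + v * LL t c"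
      using uv by (intro add_mono mult_left_mono) auto
    finally show ?thesis .
  qed
  ultimately show ?thesis by linarith
qed

definition hh :: "real \<Rightarrow> real \<Rightarrow> real" where
  "hh t x = x powr (2*t) + (1-x) powr t"
definition hdr :: "real \<Rightarrow> real \<Rightarrow> real" where
  "hdr t x = 2*t * x powr (2*t-1) - t * (1-x) powr (t-1)"

lemma hh_deriv:
  assumes "0 < x" "x < 1"
  shows "(hh t has_real_derivative hdr t x) (at x)"
proof -
  have d1: "((\<lambda>x. x powr (2*t)) has_real_derivative (2*t) * x powr (2*t - 1)) (at x)"
    using has_real_derivative_powr[OF assms(1)] by simp
  have d0: "((\<lambda>x. 1 - x) has_real_derivative -1) (at x)"
    by (auto intro!: derivative_eq_intros)
  have d2: "((\<lambda>x. (1-x) powr t) has_real_derivative (t * (1-x) powr (t-1)) * -1) (at x)"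
    using DERIV_chain2[OF has_real_derivative_powr[of "1-x" t] d0] assms by simp
  show ?thesis unfolding hh_def hdr_def using DERIV_add[OF d1 d2] by (simp add: algebra_simps)
qed

lemma hdr_sign:
  assumes "0 < t" "0 < x" "x < 1"
  shows "hdr t x \<ge> 0 \<longleftrightarrow> LL t x \<ge> 0"
proof -
  have "hdr t x = t * (2 * exp ((2*t-1) * ln x) - exp ((t-1) * ln (1-x)))"
    using assms by (simp add: hdr_def powr_def algebra_simps)
  also have "2 * exp ((2*t-1) * ln x) = exp (ln 2 + (2*t-1) * ln x)"
    by (simp add: exp_add)
  finally have "hdr t x = t * (exp (ln 2 + (2*t-1) * ln x) - exp ((t-1) * ln (1-x)))" .
  moreover have "exp (ln 2 + (2*t-1) * ln x) - exp ((t-1) * ln (1-x)) \<ge> 0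
      \<longleftrightarrow> ln 2 + (2*t-1) * ln x \<ge> (t-1) * ln (1-x)" by simp
  ultimately have "hdr t x \<ge> 0 \<longleftrightarrow> ln 2 + (2*t-1) * ln x \<ge> (t-1) * ln (1-x)"
    using assms by (simp add: zero_le_mult_iff)
  thus ?thesis by (simp add: LL_def algebra_simps)
qed

lemma hh_cont: "t > 0 \<Longrightarrow> continuous_on {0..1} (hh t)"
  unfolding hh_def
  by (intro continuous_intros continuous_on_powr') auto

lemma mvt_h:
  assumes "t > 0" "0 \<le> a" "a < b" "b \<le> 1"
  shows "\<exists>z. a < z \<and> z < b \<and> hh t b - hh t a = (b - a) * hdr t z"
proof -
  have c: "continuous_on {a..b} (hh t)"
    using continuous_on_subset[OF hh_cont[OF assms(1)]] assms by auto
  have d: "hh t differentiable at x" if "a < x" "x < b" for x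
    using hh_deriv[of x t] that assms real_differentiable_def by force
  obtain l z where lz: "a < z" "z < b" "(hh t has_real_derivative l) (at z)"
      "hh t b - hh t a = (b - a) * l"
    using MVT[OF assms(3) c d] by blast
  have "l = hdr t z" using DERIV_unique[OF lz(3) hh_deriv[of z t]] lz assms by auto
  thus ?thesis using lz by blast
qed

lemma tau_bounds:
  fixes m t :: real
  assumes "m \<ge> 2" "t > 0" "(1/m) powr (2*t) + ((m-1)/m) powr t = 1"
  shows "1/2 \<le> t \<and> t \<le> 1"
proof -
  have p: "0 < 1/m" "1/m < 1" using assms by auto
  have q: "0 < (m-1)/m" "(m-1)/m < 1" using assms by auto
  have s: "1/m + (m-1)/m = 1" using assms by (simp add: divide_simps)
  have "t \<le> 1"
  proof (rule ccontr)
    assume "\<not> t \<le> 1"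
    hence "(1/m) powr (2*t) < (1/m) powr 1" using powr_less_mono'[OF p, of 1 "2*t"] by simp
    moreover have "((m-1)/m) powr t < ((m-1)/m) powr 1"
      using powr_less_mono'[OF q, of 1 t] \<open>\<not> t \<le> 1\<close> by simp
    ultimately show False using assms s p q by simp
  qed
  moreover have "1/2 \<le> t"
  proof (rule ccontr)
    assume "\<not> 1/2 \<le> t"
    hence "(1/m) powr 1 < (1/m) powr (2*t)" using powr_less_mono'[OF p, of "2*t" 1] by simp
    moreover have "((m-1)/m) powr 1 < ((m-1)/m) powr t"
      using powr_less_mono'[OF q, of t 1] \<open>\<not> 1/2 \<le> t\<close> by simp
    ultimately show False using assms s p q by simp
  qed
  ultimately show ?thesis by simp
qed

lemma key_ineq:
  fixes m t x :: real
  assumes "m \<ge> 2" "t > 0" "(1/m) powr (2*t) + ((m-1)/m) powr t = 1"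
    and "1/m \<le> x" "x \<le> 1"
  shows "1 \<le> x powr (2*t) + (1-x) powr t"
proof (rule ccontr)
  assume neg: "\<not> 1 \<le> x powr (2*t) + (1-x) powr t"
  have tb: "1/2 \<le> t" "t \<le> 1" using tau_bounds[OF assms(1-3)] by auto
  have p: "0 < 1/m" "1/m < 1" using assms by auto
  have h0: "hh t 0 = 1" using assms by (simp add: hh_def)
  have h1: "hh t 1 = 1" using assms by (simp add: hh_def)
  have hm: "hh t (1/m) = 1"
  proof -
    have "1 - 1/m = (m-1)/m" using assms by (simp add: divide_simps)
    thus ?thesis using assms by (simp add: hh_def)
  qed
  have hx: "hh t x < 1" using neg by (simp add: hh_def)
  have x1: "1/m < x" using hx hm assms(4) by (cases "x = 1/m") auto
  have x2: "x < 1" using hx h1 assms(5) by (cases "x = 1") auto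
  obtain z0 where z0: "0 < z0" "z0 < 1/m" "hh t (1/m) - hh t 0 = (1/m - 0) * hdr t z0"
    using mvt_h[OF assms(2), of 0 "1/m"] p by auto
  obtain z1 where z1: "1/m < z1" "z1 < x" "hh t x - hh t (1/m) = (x - 1/m) * hdr t z1"
    using mvt_h[OF assms(2), of "1/m" x] p x1 x2 by auto
  obtain z2 where z2: "x < z2" "z2 < 1" "hh t 1 - hh t x = (1 - x) * hdr t z2"
    using mvt_h[OF assms(2), of x 1] p x1 x2 by auto
  have "hdr t z0 = 0" using z0 h0 hm p by simp
  hence L0: "LL t z0 \<ge> 0" using hdr_sign[of t z0] assms z0 p by simp
  have "hdr t z1 < 0"
  proof -
    have "(x - 1/m) * hdr t z1 < 0" using z1 hx hm by simp
    thus ?thesis using x1 by (simp add: mult_less_0_iff)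
  qed
  hence L1: "LL t z1 < 0" using hdr_sign[of t z1] assms z1 x2 p by simp
  have "hdr t z2 > 0"
  proof -
    have "(1 - x) * hdr t z2 > 0" using z2 hx h1 by simp
    thus ?thesis using x2 by (simp add: zero_less_mult_iff)
  qed
  hence L2: "LL t z2 \<ge> 0" using hdr_sign[of t z2] assms z2 x1 p by simp
  have "min (LL t z0) (LL t z2) \<le> LL t z1"
    using LL_quasi[OF tb, of z0 z1 z2] z0 z1 z2 by linarith
  thus False using L0 L1 L2 by linarith
qed


definition setc :: "'r::finite \<Rightarrow> int \<Rightarrow> int^'r \<Rightarrow> int^'r" where
  "setc k t w = (\<chi> i. if i = k then t else w $ i)"
definition line :: "(int^'r::finite) set \<Rightarrow> 'r \<Rightarrow> int^'r \<Rightarrow> int set" where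
  "line A k w = {t. setc k t w \<in> A}"
definition compr :: "'r::finite \<Rightarrow> (int^'r) set \<Rightarrow> (int^'r) set" where
  "compr k A = {x. 0 \<le> x$k \<and> x$k < int (card (line A k x))}"

lemma setc_nth: "setc k t w $ i = (if i = k then t else w $ i)"
  by (simp add: setc_def)
lemma setc_self[simp]: "setc k (x$k) x = x"
  by (simp add: setc_def vec_eq_iff)
lemma setc_setc[simp]: "setc k s (setc k t w) = setc k s w"
  by (simp add: setc_def vec_eq_iff)
lemma setc_add: "setc k s u + setc k t v = setc k (s+t) (u+v)"
  by (simp add: setc_def vec_eq_iff)
lemma setc_k[simp]: "setc k t w $ k = t"
  by (simp add: setc_def)
lemma line_setc[simp]: "line A k (setc k t w) = line A k w"
  by (simp add: line_def)

lemma finite_cube: "finite (cube M :: (int^'r::finite) set)"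
proof -
  have "(cube M :: (int^'r) set) \<subseteq> (\<lambda>f. vec_lambda f) ` (PiE UNIV (\<lambda>_. {0..<M}))"
    by (auto simp: cube_def intro!: image_eqI[where x="\<lambda>i. _ $ i"])
  moreover have "finite (PiE (UNIV::'r set) (\<lambda>_. {0..<M}))" by (intro finite_PiE) auto
  ultimately show ?thesis using finite_imageI finite_subset by blast
qed

lemma sumset_eq: "sumset A B = (\<lambda>(a,b). a + b) ` (A \<times> B)"
  by (auto simp: sumset_def)
lemma finite_sumset: "finite A \<Longrightarrow> finite B \<Longrightarrow> finite (sumset A B)"
  by (simp add: sumset_eq)

lemma finite_line: "finite S \<Longrightarrow> finite (line S k w)"
proof -
  assume "finite S"
  have "line S k w \<subseteq> (\<lambda>x. x $ k) ` S"
    by (auto simp: line_def intro!: image_eqI[where x="setc k _ w"])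
  thus ?thesis using \<open>finite S\<close> finite_subset by blast
qed

lemma card_decomp:
  assumes "finite S"
  shows "card S = (\<Sum>w\<in>(\<lambda>x. setc k 0 x) ` S. card (line S k w))"
proof -
  let ?P = "\<lambda>x. setc k 0 x"
  have S: "S = (\<Union>w\<in>?P ` S. (\<lambda>t. setc k t w) ` line S k w)"
  proof
    show "S \<subseteq> (\<Union>w\<in>?P ` S. (\<lambda>t. setc k t w) ` line S k w)"
    proof
      fix x assume "x \<in> S"
      hence "x \<in> (\<lambda>t. setc k t (?P x)) ` line S k (?P x)"
        by (auto simp: line_def intro!: image_eqI[where x="x$k"])
      thus "x \<in> (\<Union>w\<in>?P ` S. (\<lambda>t. setc k t w) ` line S k w)" using \<open>x \<in> S\<close> by blast
    qed
  qed (auto simp: line_def)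
  have inj: "inj_on (\<lambda>t. setc k t w) X" for w X
    by (rule inj_onI) (metis setc_k)
  have "card S = (\<Sum>w\<in>?P ` S. card ((\<lambda>t. setc k t w) ` line S k w))"
    apply (subst S)
    apply (rule card_UN_disjoint)
    using assms apply simp
    using assms finite_line apply blast
    apply (auto simp: line_def)
    by (metis setc_setc)
  also have "\<dots> = (\<Sum>w\<in>?P ` S. card (line S k w))"
    by (intro sum.cong refl card_image inj)
  finally show ?thesis .
qed

lemma sumset_1d:
  fixes X Y :: "int set"
  assumes "finite X" "finite Y" "X \<noteq> {}" "Y \<noteq> {}"
  shows "card X + card Y \<le> card (sumset X Y) + 1"
proof -
  let ?U = "(\<lambda>y. Min X + y) ` Y" and ?V = "(\<lambda>x. x + Max Y) ` X"
  have cu: "card ?U = card Y" by (rule card_image) (auto simp: inj_on_def)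
  have cv: "card ?V = card X" by (rule card_image) (auto simp: inj_on_def)
  have sub: "?U \<union> ?V \<subseteq> sumset X Y"
    using assms Min_in Max_in by (auto simp: sumset_def)
  have int: "?U \<inter> ?V \<subseteq> {Min X + Max Y}"
  proof
    fix z assume "z \<in> ?U \<inter> ?V"
    then obtain y x where "y \<in> Y" "x \<in> X" "z = Min X + y" "z = x + Max Y" by auto
    moreover have "y \<le> Max Y" "Min X \<le> x" using assms calculation by auto
    ultimately show "z \<in> {Min X + Max Y}" by auto
  qed
  have fin: "finite ?U" "finite ?V" using assms by auto
  have "card ?U + card ?V = card (?U \<union> ?V) + card (?U \<inter> ?V)"
    using card_Un_Int[OF fin] .
  moreover have "card (?U \<inter> ?V) \<le> 1" using card_mono[OF _ int] by simp
  moreover have "card (?U \<union> ?V) \<le> card (sumset X Y)"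
    using card_mono[OF finite_sumset[OF assms(1,2)] sub] .
  ultimately show ?thesis using cu cv by linarith
qed

lemma line_comp: "line (compr k A) k w = {0..<int (card (line A k w))}"
  by (auto simp: line_def compr_def)

lemma line_sub_cube: "A \<subseteq> cube M \<Longrightarrow> line A k w \<subseteq> {0..<M}"
proof
  fix t assume "A \<subseteq> cube M" "t \<in> line A k w"
  hence "setc k t w \<in> cube M" by (auto simp: line_def)
  hence "0 \<le> setc k t w $ k \<and> setc k t w $ k < M" unfolding cube_def by blast
  thus "t \<in> {0..<M}" by simp
qed

lemma card_line_cube: "A \<subseteq> cube M \<Longrightarrow> card (line A k w) \<le> nat M"
  using card_mono[OF _ line_sub_cube[of A M k w]] by simp

lemma comp_cube:
  assumes "A \<subseteq> cube M"
  shows "compr k A \<subseteq> cube M"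
proof
  fix x assume x: "x \<in> compr k A"
  have c: "x$k < M" using x card_line_cube[OF assms, of k x] by (auto simp: compr_def)
  have "line A k x \<noteq> {}" using x by (auto simp: compr_def)
  then obtain t where "setc k t x \<in> A" by (auto simp: line_def)
  hence "setc k t x \<in> cube M" using assms by auto
  hence "\<forall>i. 0 \<le> setc k t x $ i \<and> setc k t x $ i < M" unfolding cube_def by blast
  hence "\<forall>i. i \<noteq> k \<longrightarrow> 0 \<le> x$i \<and> x$i < M" by (simp add: setc_nth) metis
  thus "x \<in> cube M" using x c by (auto simp: cube_def compr_def)
qed

lemma proj_comp:
  assumes "finite A"
  shows "(\<lambda>x. setc k 0 x) ` compr k A = (\<lambda>x. setc k 0 x) ` A"
proof
  show "(\<lambda>x. setc k 0 x) ` compr k A \<subseteq> (\<lambda>x. setc k 0 x) ` A"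
  proof
    fix z assume "z \<in> (\<lambda>x. setc k 0 x) ` compr k A"
    then obtain x where x: "x \<in> compr k A" "z = setc k 0 x" by auto
    have "line A k x \<noteq> {}" using x by (auto simp: compr_def)
    then obtain t where "setc k t x \<in> A" by (auto simp: line_def)
    moreover have "setc k 0 (setc k t x) = z" using x by simp
    ultimately show "z \<in> (\<lambda>x. setc k 0 x) ` A" by blast
  qed
next
  show "(\<lambda>x. setc k 0 x) ` A \<subseteq> (\<lambda>x. setc k 0 x) ` compr k A"
  proof
    fix z assume "z \<in> (\<lambda>x. setc k 0 x) ` A"
    then obtain a where a: "a \<in> A" "z = setc k 0 a" by auto
    have "a$k \<in> line A k a" using a by (simp add: line_def)
    hence "card (line A k a) > 0" using finite_line[OF assms] by (auto simp: card_gt_0_iff)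
    hence "z \<in> compr k A" using a by (simp add: compr_def)
    moreover have "setc k 0 z = z" using a by simp
    ultimately show "z \<in> (\<lambda>x. setc k 0 x) ` compr k A" by (metis image_eqI)
  qed
qed

lemma card_comp:
  assumes "A \<subseteq> cube M"
  shows "card (compr k A) = card A"
proof -
  have fA: "finite A" using assms finite_cube finite_subset by blast
  have fC: "finite (compr k A)" using comp_cube[OF assms] finite_cube finite_subset by blast
  have "card (compr k A) = (\<Sum>w\<in>(\<lambda>x. setc k 0 x) ` compr k A. card (line (compr k A) k w))"
    by (rule card_decomp[OF fC])
  also have "\<dots> = (\<Sum>w\<in>(\<lambda>x. setc k 0 x) ` A. card (line A k w))"
    by (simp add: proj_comp[OF fA] line_comp)
  also have "\<dots> = card A" by (rule card_decomp[OF fA, symmetric])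
  finally show ?thesis .
qed

lemma setc0_add: "setc k 0 (x + y) = setc k 0 x + setc k 0 y"
  using setc_add[of k 0 x 0 y] by simp

lemma card_comp_sumset:
  assumes A: "A \<subseteq> cube M" and B: "B \<subseteq> cube M"
  shows "card (sumset (compr k A) (compr k B)) \<le> card (sumset A B)"
proof -
  let ?P = "\<lambda>x. setc k 0 x"
  define S where "S = sumset A B"
  define T where "T = sumset (compr k A) (compr k B)"
  have fA: "finite A" using A finite_cube finite_subset by blast
  have fB: "finite B" using B finite_cube finite_subset by blast
  have fCA: "finite (compr k A)" using comp_cube[OF A] finite_cube finite_subset by blast
  have fCB: "finite (compr k B)" using comp_cube[OF B] finite_cube finite_subset by blast
  have fS: "finite S" unfolding S_def using fA fB by (rule finite_sumset)
  have fT: "finite T" unfolding T_def using fCA fCB by (rule finite_sumset)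
  have lineb: "card (line T k w) \<le> card (line S k w)" for w
  proof -
    have "line T k w \<subseteq> {0..<int (card (line S k w))}"
    proof
      fix t assume "t \<in> line T k w"
      then obtain a' b' where ab: "a' \<in> compr k A" "b' \<in> compr k B" "setc k t w = a' + b'"
        by (auto simp: line_def T_def sumset_def)
      define X where "X = line A k a'"
      define Y where "Y = line B k b'"
      have ha: "0 \<le> a'$k" "a'$k < int (card X)" using ab by (auto simp: compr_def X_def)
      have hb: "0 \<le> b'$k" "b'$k < int (card Y)" using ab by (auto simp: compr_def Y_def)
      have fX: "finite X" "finite Y" using fA fB finite_line X_def Y_def by auto
      have ne: "X \<noteq> {}" "Y \<noteq> {}" using ha hb by auto
      have tt: "t = a'$k + b'$k" using arg_cong[OF ab(3), of "\<lambda>v. v $ k"] by simp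
      have "sumset X Y \<subseteq> line S k w"
      proof
        fix z assume "z \<in> sumset X Y"
        then obtain s u where su: "s \<in> X" "u \<in> Y" "z = s + u" by (auto simp: sumset_def)
        have "setc k s a' + setc k u b' = setc k z w"
          using setc_add[of k s a' u b'] ab(3) su(3) by (metis setc_setc)
        moreover have "setc k s a' \<in> A" "setc k u b' \<in> B" using su by (auto simp: X_def Y_def line_def)
        ultimately show "z \<in> line S k w" unfolding line_def S_def sumset_def by (metis (mono_tags, lifting) mem_Collect_eq)
      qed
      hence "card (sumset X Y) \<le> card (line S k w)"
        using card_mono[OF finite_line[OF fS]] by blast
      hence "card X + card Y \<le> card (line S k w) + 1"
        using sumset_1d[OF fX ne] by linarith
      thus "t \<in> {0..<int (card (line S k w))}" using tt ha hb by simp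
    qed
    from card_mono[OF _ this] show ?thesis by simp
  qed
  have proj: "?P ` T \<subseteq> ?P ` S"
  proof
    fix z assume "z \<in> ?P ` T"
    then obtain a' b' where ab: "a' \<in> compr k A" "b' \<in> compr k B" "z = ?P (a' + b')"
      by (auto simp: T_def sumset_def)
    obtain a where a: "a \<in> A" "?P a' = ?P a" using ab(1) proj_comp[OF fA, of k] by blast
    obtain b where b: "b \<in> B" "?P b' = ?P b" using ab(2) proj_comp[OF fB, of k] by blast
    have "z = ?P (a + b)" using ab(3) a b by (simp add: setc0_add)
    moreover have "a + b \<in> S" using a b by (auto simp: S_def sumset_def)
    ultimately show "z \<in> ?P ` S" by blast
  qed
  have "card T = (\<Sum>w\<in>?P ` T. card (line T k w))" by (rule card_decomp[OF fT])
  also have "\<dots> \<le> (\<Sum>w\<in>?P ` T. card (line S k w))" by (intro sum_mono lineb)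
  also have "\<dots> \<le> (\<Sum>w\<in>?P ` S. card (line S k w))"
    by (rule sum_mono2) (use fS proj in auto)
  also have "\<dots> = card S" by (rule card_decomp[OF fS, symmetric])
  finally show ?thesis by (simp add: S_def T_def)
qed

lemma comp_heavy:
  assumes A: "A \<subseteq> cube M"
  shows "card (compr k A) \<le> card {x \<in> compr k A. x$k = 0} * nat M"
proof -
  let ?C0 = "{x \<in> compr k A. x$k = 0}"
  have fC: "finite (compr k A)" using comp_cube[OF A] finite_cube finite_subset by blast
  have "compr k A \<subseteq> (\<lambda>(y,t). setc k t y) ` (?C0 \<times> {0..<M})"
  proof
    fix x assume x: "x \<in> compr k A"
    have "setc k 0 x \<in> ?C0" using x by (simp add: compr_def)
    moreover have "x$k \<in> {0..<M}" using comp_cube[OF A] x by (auto simp: cube_def)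
    ultimately show "x \<in> (\<lambda>(y,t). setc k t y) ` (?C0 \<times> {0..<M})"
      by (intro image_eqI[where x="(setc k 0 x, x$k)"]) auto
  qed
  hence "card (compr k A) \<le> card ((\<lambda>(y,t). setc k t y) ` (?C0 \<times> {0..<M}))"
    by (intro card_mono finite_imageI finite_cartesian_product) (use fC in auto)
  also have "\<dots> \<le> card (?C0 \<times> {0..<M})"
    by (intro card_image_le finite_cartesian_product) (use fC in auto)
  finally show ?thesis by (simp add: card_cartesian_product)
qed

lemma sumset_comm: "sumset A B = sumset B (A :: ('a::ab_semigroup_add) set)"
  unfolding sumset_def by (auto; metis add.commute)

lemma peel:
  assumes C: "C \<subseteq> cube M" and D: "D \<subseteq> cube M"
  shows "card (sumset {x\<in>C. x$k = 0} {x\<in>D. x$k = 0}) + card (sumset {x\<in>C. x$k \<noteq> 0} D)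
         \<le> card (sumset C D)"
proof -
  have fC: "finite C" using C finite_cube finite_subset by blast
  have fD: "finite D" using D finite_cube finite_subset by blast
  let ?U = "sumset {x\<in>C. x$k = 0} {x\<in>D. x$k = 0}" and ?V = "sumset {x\<in>C. x$k \<noteq> 0} D"
  have fU: "finite ?U" "finite ?V" using fC fD by (auto intro: finite_sumset)
  have disj: "?U \<inter> ?V = {}"
  proof -
    have U0: "z$k = 0" if "z \<in> ?U" for z using that by (auto simp: sumset_def)
    have V0: "z$k > 0" if zV: "z \<in> ?V" for z
    proof -
      obtain c d where "c \<in> C" "d \<in> D" "c$k \<noteq> 0" "z = c + d" using zV unfolding sumset_def by blast
      moreover have "0 \<le> c$k" "0 \<le> d$k" using calculation C D by (auto simp: cube_def)
      ultimately show ?thesis by simp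
    qed
    show ?thesis
    proof (rule disjoint_iff[THEN iffD2], intro allI impI)
      fix z assume "z \<in> ?U"
      hence "z$k = 0" by (rule U0)
      thus "z \<notin> ?V" using V0 by force
    qed
  qed
  have "?U \<union> ?V \<subseteq> sumset C D" by (auto simp: sumset_def)
  hence "card (?U \<union> ?V) \<le> card (sumset C D)" using card_mono finite_sumset fC fD by blast
  thus ?thesis using card_Un_disjoint[OF fU disj] by simp
qed

lemma card_split:
  assumes "finite C"
  shows "card C = card {x\<in>C. x$k = 0} + card {x\<in>C. x$k \<noteq> 0}"
proof -
  have "C = {x\<in>C. x$k = 0} \<union> {x\<in>C. x$k \<noteq> 0}" by auto
  moreover have "card ({x\<in>C. x$k = 0} \<union> {x\<in>C. x$k \<noteq> 0}) = card {x\<in>C. x$k = 0} + card {x\<in>C. x$k \<noteq> 0}"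
    by (rule card_Un_disjoint) (use assms in auto)
  ultimately show ?thesis by simp
qed

lemma num_step:
  fixes a b c0 d0 m t :: real
  assumes a: "a > 0" and b: "b > 0" and c0: "0 \<le> c0" "c0 \<le> a" and d0: "0 \<le> d0"
    and cd: "c0 * b \<le> d0 * a" and am: "a \<le> m * c0" and m: "m > 0" and t: "t > 0"
    and H: "\<And>x. 1/m \<le> x \<Longrightarrow> x \<le> 1 \<Longrightarrow> 1 \<le> x powr (2*t) + (1-x) powr t"
  shows "(a*b) powr t \<le> (c0*d0) powr t + ((a-c0)*b) powr t"
proof -
  define x where "x = c0 / a"
  define y where "y = d0 / b"
  have x1: "1/m \<le> x" using am a m by (simp add: x_def divide_simps mult.commute)
  have x2: "x \<le> 1" "0 \<le> x" using c0 a by (auto simp: x_def divide_simps)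
  have xy: "x \<le> y" using cd a b by (simp add: x_def y_def divide_simps mult.commute)
  have c0e: "c0 * d0 = (x*y) * (a*b)" using a b by (simp add: x_def y_def)
  have c1e: "(a-c0)*b = (1-x)*(a*b)" using a b by (simp add: x_def algebra_simps)
  have P0: "(a*b) powr t \<ge> 0" by simp
  have e1: "(c0*d0) powr t = (x*y) powr t * (a*b) powr t"
    unfolding c0e using x2 xy a b by (subst powr_mult) auto
  have i1: "(x*x) powr t \<le> (x*y) powr t"
  proof (rule powr_mono2)
    show "x*x \<le> x*y" using mult_left_mono[OF xy x2(2)] .
    show "0 \<le> t" using t by simp
    show "0 \<le> x*x" by simp
  qed
  have e2: "(x*x) powr t = x powr (2*t)"
  proof -
    have "x powr (2*t) = x powr (t + t)" by (simp only: mult_2)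
    also have "\<dots> = x powr t * x powr t" by (rule powr_add)
    also have "\<dots> = (x*x) powr t" using powr_mult[of x x t] x2 by simp
    finally show ?thesis by simp
  qed
  have e3: "((a-c0)*b) powr t = (1-x) powr t * (a*b) powr t"
    unfolding c1e using x2 a b by (subst powr_mult) auto
  have "x powr (2*t) * (a*b) powr t \<le> (c0*d0) powr t"
    unfolding e1 e2[symmetric] using i1 P0 by (rule mult_right_mono)
  hence "(c0*d0) powr t + ((a-c0)*b) powr t \<ge> (x powr (2*t) + (1-x) powr t) * (a*b) powr t"
    unfolding e3 by (simp add: distrib_right)
  moreover have "(x powr (2*t) + (1-x) powr t) * (a*b) powr t \<ge> 1 * (a*b) powr t"
    using H[OF x1 x2(1)] by (intro mult_right_mono) auto
  ultimately show ?thesis by simp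
qed

definition act :: "(int^'r::finite) set \<Rightarrow> (int^'r) set \<Rightarrow> 'r set" where
  "act A B = {k. \<exists>x\<in>A \<union> B. x$k \<noteq> 0}"

lemma main:
  fixes M :: int and t :: real and A B :: "(int^'r::finite) set"
  assumes M: "M \<ge> 1" and t: "t > 0"
    and H: "\<And>x. 1/real_of_int M \<le> x \<Longrightarrow> x \<le> 1 \<Longrightarrow> 1 \<le> x powr (2*t) + (1-x) powr t"
  shows "A \<subseteq> cube M \<Longrightarrow> B \<subseteq> cube M \<Longrightarrow>
    (real (card A) * real (card B)) powr t \<le> real (card (sumset A B))"
proof (induction "(card A + card B) * (CARD('r) + 1) + card (act A B)" arbitrary: A B rule: less_induct)
  case less
  note A = less.prems(1) and B = less.prems(2)
  have fA: "finite A" using A finite_cube finite_subset by blast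
  have fB: "finite B" using B finite_cube finite_subset by blast
  have actR: "card (act X Y) \<le> CARD('r)" for X Y :: "(int^'r) set"
    by (rule card_mono) auto
  show ?case
  proof (cases "A = {} \<or> B = {}")
    case True thus ?thesis by auto
  next
    case ne: False
    show ?thesis
    proof (cases "act A B = {}")
      case True
      hence "\<forall>x\<in>A \<union> B. x = 0" by (auto simp: act_def vec_eq_iff)
      hence "A = {0}" "B = {0}" using ne by (metis UnCI ex_in_conv insertI1 subsetI subset_singletonD)+
      moreover have "sumset {0::int^'r} {0} = {0}" by (auto simp: sumset_def)
      ultimately show ?thesis by simp
    next
      case False
      then obtain k where k: "k \<in> act A B" by blast
      define C where "C = compr k A"
      define D where "D = compr k B"
      define C0 where "C0 = {x\<in>C. x$k = 0}"
      define C1 where "C1 = {x\<in>C. x$k \<noteq> 0}"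
      define D0 where "D0 = {x\<in>D. x$k = 0}"
      define D1 where "D1 = {x\<in>D. x$k \<noteq> 0}"
      have Cc: "C \<subseteq> cube M" "D \<subseteq> cube M" using comp_cube A B by (auto simp: C_def D_def)
      have fC: "finite C" "finite D" using Cc finite_cube finite_subset by blast+
      have cA: "card C = card A" "card D = card B" using card_comp A B by (auto simp: C_def D_def)
      have sp: "card C = card C0 + card C1" "card D = card D0 + card D1"
        using card_split fC by (auto simp: C0_def C1_def D0_def D1_def)
      have hv: "card C \<le> card C0 * nat M" "card D \<le> card D0 * nat M"
        using comp_heavy A B by (auto simp: C_def D_def C0_def D0_def)
      have ss: "card (sumset C D) \<le> card (sumset A B)"
        using card_comp_sumset A B by (auto simp: C_def D_def)
      have pa: "card (sumset C0 D0) + card (sumset C1 D) \<le> card (sumset C D)"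
        using peel[OF Cc] by (simp add: C0_def C1_def D0_def)
      have pb: "card (sumset C0 D0) + card (sumset C D1) \<le> card (sumset C D)"
        using peel[OF Cc(2,1), of k] by (simp add: C0_def D1_def D0_def sumset_comm)
      have apos: "card A > 0" "card B > 0" using ne fA fB by auto
      have sub: "C0 \<subseteq> cube M" "C1 \<subseteq> cube M" "D0 \<subseteq> cube M" "D1 \<subseteq> cube M"
        using Cc by (auto simp: C0_def C1_def D0_def D1_def)
      have Mr: "real_of_int M > 0" using M by simp
      have hvr: "real (card A) \<le> real_of_int M * real (card C0)"
                "real (card B) \<le> real_of_int M * real (card D0)"
      proof -
        have "real (card C) \<le> real (card C0 * nat M)" using hv by linarith
        thus "real (card A) \<le> real_of_int M * real (card C0)" using cA M by (simp add: mult.commute)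
        have "real (card D) \<le> real (card D0 * nat M)" using hv by linarith
        thus "real (card B) \<le> real_of_int M * real (card D0)" using cA M by (simp add: mult.commute)
      qed
      show ?thesis
      proof (cases "card C1 > 0 \<and> card C0 * card B \<le> card D0 * card A")
        case True
        have m1: "(card C0 + card D0) * (CARD('r) + 1) + card (act C0 D0)
                  < (card A + card B) * (CARD('r) + 1) + card (act A B)"
        proof -
          have "card C0 + card D0 + 1 \<le> card A + card B" using True sp cA by linarith
          hence "(card C0 + card D0 + 1) * (CARD('r) + 1) \<le> (card A + card B) * (CARD('r) + 1)"
            by (rule mult_right_mono) simp
          thus ?thesis using actR[of C0 D0] by (simp add: algebra_simps)
        qed
        have m2: "(card C1 + card D) * (CARD('r) + 1) + card (act C1 D)
                  < (card A + card B) * (CARD('r) + 1) + card (act A B)"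
        proof -
          have "card C1 + card D + 1 \<le> card A + card B"
          proof -
            have "card C0 > 0" using hv(1) apos cA by (cases "card C0 = 0") auto
            thus ?thesis using sp cA by linarith
          qed
          hence "(card C1 + card D + 1) * (CARD('r) + 1) \<le> (card A + card B) * (CARD('r) + 1)"
            by (rule mult_right_mono) simp
          thus ?thesis using actR[of C1 D] by (simp add: algebra_simps)
        qed
        have i1: "(real (card C0) * real (card D0)) powr t \<le> real (card (sumset C0 D0))"
          using less.hyps[OF m1 sub(1) sub(3)] .
        have i2: "(real (card C1) * real (card D)) powr t \<le> real (card (sumset C1 D))"
          using less.hyps[OF m2 sub(2) Cc(2)] .
        have "(real (card A) * real (card B)) powr t
              \<le> (real (card C0) * real (card D0)) powr t + ((real (card A) - real (card C0)) * real (card B)) powr t"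
        proof (rule num_step[where m="real_of_int M", OF _ _ _ _ _ _ hvr(1) Mr t H])
          show "real (card C0) * real (card B) \<le> real (card D0) * real (card A)"
            using True by (metis of_nat_le_iff of_nat_mult)
        qed (use apos sp cA in auto)
        also have "real (card A) - real (card C0) = real (card C1)" using sp cA by simp
        finally have fin: "(real (card A) * real (card B)) powr t
            \<le> (real (card C0) * real (card D0)) powr t + (real (card C1) * real (card B)) powr t" .
        have "card (sumset C0 D0) + card (sumset C1 D) \<le> card (sumset A B)" using pa ss by linarith
        hence "real (card (sumset C0 D0)) + real (card (sumset C1 D)) \<le> real (card (sumset A B))"
          by (metis of_nat_add of_nat_le_iff)
        thus ?thesis using fin i1 i2 cA by simp
      next
        case F1: False
        show ?thesis
        proof (cases "card D1 > 0 \<and> card D0 * card A \<le> card C0 * card B")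
          case True
          have m1: "(card C0 + card D0) * (CARD('r) + 1) + card (act C0 D0)
                    < (card A + card B) * (CARD('r) + 1) + card (act A B)"
          proof -
            have "card C0 + card D0 + 1 \<le> card A + card B" using True sp cA by linarith
            hence "(card C0 + card D0 + 1) * (CARD('r) + 1) \<le> (card A + card B) * (CARD('r) + 1)"
              by (rule mult_right_mono) simp
            thus ?thesis using actR[of C0 D0] by (simp add: algebra_simps)
          qed
          have m2: "(card C + card D1) * (CARD('r) + 1) + card (act C D1)
                    < (card A + card B) * (CARD('r) + 1) + card (act A B)"
          proof -
            have "card C + card D1 + 1 \<le> card A + card B"
            proof -
              have "card D0 > 0" using hv(2) apos cA by (cases "card D0 = 0") auto
              thus ?thesis using sp cA by linarith
            qed
            hence "(card C + card D1 + 1) * (CARD('r) + 1) \<le> (card A + card B) * (CARD('r) + 1)"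
              by (rule mult_right_mono) simp
            thus ?thesis using actR[of C D1] by (simp add: algebra_simps)
          qed
          have i1: "(real (card C0) * real (card D0)) powr t \<le> real (card (sumset C0 D0))"
            using less.hyps[OF m1 sub(1) sub(3)] .
          have i2: "(real (card C) * real (card D1)) powr t \<le> real (card (sumset C D1))"
            using less.hyps[OF m2 Cc(1) sub(4)] .
          have "(real (card B) * real (card A)) powr t
                \<le> (real (card D0) * real (card C0)) powr t + ((real (card B) - real (card D0)) * real (card A)) powr t"
          proof (rule num_step[where m="real_of_int M", OF _ _ _ _ _ _ hvr(2) Mr t H])
            show "real (card D0) * real (card A) \<le> real (card C0) * real (card B)"
              using True by (metis of_nat_le_iff of_nat_mult)
          qed (use apos sp cA in auto)
          also have "real (card B) - real (card D0) = real (card D1)" using sp cA by simp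
          finally have fin: "(real (card B) * real (card A)) powr t
              \<le> (real (card D0) * real (card C0)) powr t + (real (card D1) * real (card A)) powr t" .
          have "card (sumset C0 D0) + card (sumset C D1) \<le> card (sumset A B)" using pb ss by linarith
          hence "real (card (sumset C0 D0)) + real (card (sumset C D1)) \<le> real (card (sumset A B))"
            by (metis of_nat_add of_nat_le_iff)
          thus ?thesis using fin i1 i2 cA by (simp add: mult.commute)
        next
          case F2: False
          have le: "card C0 \<le> card A" "card D0 \<le> card B" using sp cA by linarith+
          have e1: "card C1 = 0"
          proof (rule ccontr)
            assume c: "card C1 \<noteq> 0"
            hence "\<not> card C0 * card B \<le> card D0 * card A" using F1 by simp
            hence lt: "card D0 * card A < card C0 * card B" by simp
            have "card D1 = 0" using F2 less_imp_le[OF lt] by simp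
            hence "card D0 = card B" using sp(2) cA(2) by simp
            hence "card B * card A < card C0 * card B" using lt by simp
            hence "card A < card C0" by (simp add: mult.commute)
            thus False using le by simp
          qed
          have e2: "card D1 = 0"
          proof (rule ccontr)
            assume c: "card D1 \<noteq> 0"
            hence "\<not> card D0 * card A \<le> card C0 * card B" using F2 by simp
            hence lt: "card C0 * card B < card D0 * card A" by simp
            have "card C1 = 0" using F1 less_imp_le[OF lt] by simp
            hence "card C0 = card A" using sp(1) cA(1) by simp
            hence "card A * card B < card D0 * card A" using lt by simp
            hence "card B < card D0" by (simp add: mult.commute)
            thus False using le by simp
          qed
          have fC1: "finite C1" "finite D1" using fC by (simp_all add: C1_def D1_def)
          have C1e: "C1 = {}" "D1 = {}" using e1 e2 fC1 by simp_all
          have actsub: "act C D \<subseteq> act A B - {k}"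
          proof
            fix j assume j: "j \<in> act C D"
            then obtain x where x: "x \<in> C \<union> D" "x$j \<noteq> 0" by (auto simp: act_def)
            have "x$k = 0" using x C1e by (auto simp: C1_def D1_def)
            hence jk: "j \<noteq> k" using x by auto
            have "\<exists>y\<in>A \<union> B. y$j \<noteq> 0"
            proof (cases "x \<in> C")
              case True
              hence "line A k x \<noteq> {}" by (auto simp: C_def compr_def)
              then obtain s where "setc k s x \<in> A" by (auto simp: line_def)
              moreover have "setc k s x $ j = x $ j" using jk by (simp add: setc_nth)
              ultimately show ?thesis using x by (intro bexI[of _ "setc k s x"]) auto
            next
              case False
              hence "x \<in> D" using x by auto
              hence "line B k x \<noteq> {}" by (auto simp: D_def compr_def)
              then obtain s where "setc k s x \<in> B" by (auto simp: line_def)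
              moreover have "setc k s x $ j = x $ j" using jk by (simp add: setc_nth)
              ultimately show ?thesis using x by (intro bexI[of _ "setc k s x"]) auto
            qed
            thus "j \<in> act A B - {k}" using jk by (auto simp: act_def)
          qed
          have "card (act C D) < card (act A B)"
            by (rule psubset_card_mono) (use actsub k in auto)
          hence m: "(card C + card D) * (CARD('r) + 1) + card (act C D)
                    < (card A + card B) * (CARD('r) + 1) + card (act A B)" using cA by simp
          have "(real (card C) * real (card D)) powr t \<le> real (card (sumset C D))"
            using less.hyps[OF m Cc] .
          thus ?thesis using cA ss by simp
        qed
      qed
    qed
  qed
qed


theorem theorem5:
  fixes M :: int and tau :: real and A B :: "(int ^ 'r) set"
  assumes "M \<ge> 2"
    and "tau > 0"
    and "(1 / real_of_int M) powr (2 * tau) + ((real_of_int M - 1) / real_of_int M) powr tau = 1"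
    and "A \<subseteq> cube M" and "B \<subseteq> cube M"
  shows "real (card (sumset A B)) \<ge> (real (card A) * real (card B)) powr tau"
proof -
  have m2: "real_of_int M \<ge> 2" using assms(1) by simp
  show ?thesis
  proof (rule main[of M tau A B])
    show "1 \<le> M" using assms(1) by simp
    show "0 < tau" by (rule assms(2))
    show "1 \<le> x powr (2*tau) + (1-x) powr tau" if "1/real_of_int M \<le> x" "x \<le> 1" for x
      by (rule key_ineq[OF m2 assms(2) assms(3) that])
  qed (use assms in auto)
qed

end
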